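(* Let $X$ be a real normed linear space and $x\in X\setminus\{\theta\}$. Let $y_1,y_2\in X\setminus\{\theta\}$ satisfy $x\perp_B^\varepsilon y_1$ and $x\perp_B^\varepsilon y_2$, where $\varepsilon\in[0,1)$ is such that $$0\le\varepsilon<\frac{2\|y_1+y_2\|}{3(\|y_1\|+\|y_2\|)}<1.$$ If $x$ is $\varepsilon$-smooth, then there exists $\varepsilon_1\in[0,1)$ such that $x\perp_B^{\varepsilon_1}(y_1+y_2)$.
   Context: For $\delta\in[0,1)$, $x\perp_B^\delta y$ (approximate Birkhoff–James orthogonality) means $\|x+\lambda y\|^2\ge\|x\|^2-2\delta\|x\|\|\lambda y\|$ for all $\lambda\in\mathbb{R}$. For $x\neq\theta$, $J(x)=\{f\in S_{X^*}:f(x)=\|x\|\}$, and $x$ is $\varepsilon$-smooth if $\sup_{f,g\in J(x)}\|f-g\|\le\varepsilon$. *)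

theory Defs
  imports "HOL-Analysis.Analysis"
begin

definition approx_bj_orth :: "real \<Rightarrow> 'a::real_normed_vector \<Rightarrow> 'a \<Rightarrow> bool" where
  "approx_bj_orth \<delta> x y \<longleftrightarrow>
     (\<forall>t::real. (norm (x + t *\<^sub>R y))\<^sup>2 \<ge> (norm x)\<^sup>2 - 2 * \<delta> * norm x * norm (t *\<^sub>R y))"

definition support_functionals :: "'a::real_normed_vector \<Rightarrow> ('a \<Rightarrow>\<^sub>L real) set" where
  "support_functionals x = {f. norm f = 1 \<and> blinfun_apply f x = norm x}"

definition eps_smooth :: "real \<Rightarrow> 'a::real_normed_vector \<Rightarrow> bool" where
  "eps_smooth \<epsilon> x \<longleftrightarrow>
     (\<forall>f\<in>support_functionals x. \<forall>g\<in>support_functionals x. norm (f - g) \<le> \<epsilon>)"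

end

theory Submission
  imports Defs
begin

definition dlr :: "('a::real_normed_vector \<times> real) set \<Rightarrow> bool" where
  "dlr H \<longleftrightarrow> (0,0) \<in> H \<and> (\<forall>u r v s. (u,r) \<in> H \<longrightarrow> (v,s) \<in> H \<longrightarrow> (u+v, r+s) \<in> H)
     \<and> (\<forall>u r c. (u,r) \<in> H \<longrightarrow> (c *\<^sub>R u, c*r) \<in> H) \<and> (\<forall>u r. (u,r) \<in> H \<longrightarrow> r \<le> norm u)"

lemma dlr_unique:
  assumes "dlr H" "(v,r) \<in> H" "(v,s) \<in> H" shows "r = s"
proof -
  have a: "(v + (-1) *\<^sub>R v, r + (-1) * s) \<in> H" "(v + (-1) *\<^sub>R v, s + (-1) * r) \<in> H"
    using assms unfolding dlr_def by blast+
  have "r + (-1) * s \<le> norm (v + (-1) *\<^sub>R v)" "s + (-1) * r \<le> norm (v + (-1) *\<^sub>R v)"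
    using a assms(1) unfolding dlr_def by blast+
  then show ?thesis by simp
qed

lemma dlr_ext:
  assumes "dlr H" and c: "\<And>u r. (u,r) \<in> H \<Longrightarrow> r + c \<le> norm (u + z) \<and> r - c \<le> norm (u - z)"
  shows "dlr {(u + a *\<^sub>R z, r + a * c) | u r a. (u,r) \<in> H}" (is "dlr ?H")
  unfolding dlr_def
proof (intro conjI allI impI)
  have "(0,0) \<in> H" using assms(1) unfolding dlr_def by blast
  then show "(0,0) \<in> ?H" by force
next
  fix u r v s assume "(u,r) \<in> ?H" "(v,s) \<in> ?H"
  then obtain u1 r1 a1 u2 r2 a2 where h: "(u1,r1) \<in> H" "(u2,r2) \<in> H"
    "u = u1 + a1 *\<^sub>R z" "r = r1 + a1 * c" "v = u2 + a2 *\<^sub>R z" "s = r2 + a2 * c" by blast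
  have "(u1+u2, r1+r2) \<in> H" using h assms(1) unfolding dlr_def by blast
  moreover have "u + v = (u1+u2) + (a1+a2) *\<^sub>R z" "r + s = (r1+r2) + (a1+a2) * c"
    using h by (auto simp: algebra_simps)
  ultimately show "(u+v, r+s) \<in> ?H" by blast
next
  fix u r k assume "(u,r) \<in> ?H"
  then obtain u1 r1 a1 where h: "(u1,r1) \<in> H" "u = u1 + a1 *\<^sub>R z" "r = r1 + a1 * c" by blast
  have "(k *\<^sub>R u1, k*r1) \<in> H" using h assms(1) unfolding dlr_def by blast
  moreover have "k *\<^sub>R u = k *\<^sub>R u1 + (k*a1) *\<^sub>R z" "k * r = k*r1 + (k*a1) * c"
    using h by (auto simp: algebra_simps)
  ultimately show "(k *\<^sub>R u, k*r) \<in> ?H" by blast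
next
  fix u r assume "(u,r) \<in> ?H"
  then obtain u1 r1 a where h: "(u1,r1) \<in> H" "u = u1 + a *\<^sub>R z" "r = r1 + a * c" by blast
  show "r \<le> norm u"
  proof (cases "a = 0")
    case True
    then show ?thesis using h assms(1) unfolding dlr_def by auto
  next
    case False
    have hs: "((1/\<bar>a\<bar>) *\<^sub>R u1, (1/\<bar>a\<bar>) * r1) \<in> H" using h assms(1) unfolding dlr_def by blast
    have nu: "norm u = \<bar>a\<bar> * norm ((1/\<bar>a\<bar>) *\<^sub>R u1 + sgn a *\<^sub>R z)"
    proof -
      have "u = \<bar>a\<bar> *\<^sub>R ((1/\<bar>a\<bar>) *\<^sub>R u1 + sgn a *\<^sub>R z)"
        using h False by (auto simp: algebra_simps sgn_if)
      then show ?thesis by simp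
    qed
    show ?thesis
    proof (cases "a > 0")
      case True
      have "(1/\<bar>a\<bar>) * r1 + c \<le> norm ((1/\<bar>a\<bar>) *\<^sub>R u1 + z)" using c[OF hs] by blast
      then have "\<bar>a\<bar> * ((1/\<bar>a\<bar>) * r1 + c) \<le> \<bar>a\<bar> * norm ((1/\<bar>a\<bar>) *\<^sub>R u1 + z)"
        by (simp add: mult_left_mono)
      then show ?thesis using True h nu by (simp add: algebra_simps)
    next
      case False
      with \<open>a \<noteq> 0\<close> have an: "a < 0" by simp
      have hs2: "((1/(-a)) *\<^sub>R u1, (1/(-a)) * r1) \<in> H" using h assms(1) unfolding dlr_def by blast
      have "(1/(-a)) * r1 - c \<le> norm ((1/(-a)) *\<^sub>R u1 - z)" using c[OF hs2] by blast
      then have "(-a) * ((1/(-a)) * r1 - c) \<le> (-a) * norm ((1/(-a)) *\<^sub>R u1 - z)"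
        using an by (simp add: mult_left_mono)
      also have "(-a) * norm ((1/(-a)) *\<^sub>R u1 - z) = norm ((-a) *\<^sub>R ((1/(-a)) *\<^sub>R u1 - z))"
        using an by simp
      also have "(-a) *\<^sub>R ((1/(-a)) *\<^sub>R u1 - z) = u"
        using an h by (simp add: algebra_simps)
      finally have "(-a) * ((1/(-a)) * r1 - c) \<le> norm u" .
      then show ?thesis using an h by (simp add: algebra_simps)
    qed
  qed
qed

lemma dlr_c_exists:
  assumes "dlr H"
  shows "\<exists>c. \<forall>u r. (u,r) \<in> H \<longrightarrow> r + c \<le> norm (u + z) \<and> r - c \<le> norm (u - z)"
proof -
  define S where "S = {r - norm (u - z) | u r. (u,r) \<in> H}"
  have key: "r - norm (u - z) \<le> norm (v + z) - s" if "(u,r) \<in> H" "(v,s) \<in> H" for u r v s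
  proof -
    have "(u+v, r+s) \<in> H" using that assms unfolding dlr_def by blast
    then have "r + s \<le> norm (u + v)" using assms unfolding dlr_def by blast
    also have "norm (u+v) \<le> norm (u - z) + norm (v + z)"
      using norm_triangle_ineq[of "u - z" "v + z"] by simp
    finally show ?thesis by simp
  qed
  have ne: "S \<noteq> {}" using assms unfolding dlr_def S_def by blast
  have bdd: "bdd_above S"
  proof -
    have "(0,0) \<in> H" using assms unfolding dlr_def by blast
    then show ?thesis unfolding S_def bdd_above_def using key by fastforce
  qed
  show ?thesis
  proof (intro exI allI impI conjI)
    fix u r assume h: "(u,r) \<in> H"
    have "Sup S \<le> norm (u + z) - r"
      using ne key h by (intro cSup_least) (auto simp: S_def)
    then show "r + Sup S \<le> norm (u + z)" by simp
    have "r - norm (u - z) \<le> Sup S" using bdd h by (intro cSup_upper) (auto simp: S_def)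
    then show "r - Sup S \<le> norm (u - z)" by simp
  qed
qed

lemma hahn_banach_dlr:
  fixes H0 :: "('a::real_normed_vector \<times> real) set"
  assumes "dlr H0"
  shows "\<exists>f::'a \<Rightarrow>\<^sub>L real. norm f \<le> 1 \<and> (\<forall>v r. (v,r) \<in> H0 \<longrightarrow> blinfun_apply f v = r)"
proof -
  define A where "A = {H. dlr H \<and> H0 \<subseteq> H}"
  have "\<forall>C\<in>chains A. \<exists>U\<in>A. \<forall>X\<in>C. X \<subseteq> U"
  proof
    fix C assume C: "C \<in> chains A"
    show "\<exists>U\<in>A. \<forall>X\<in>C. X \<subseteq> U"
    proof (cases "C = {}")
      case True
      then show ?thesis using assms A_def by auto
    next
      case False
      have CA: "C \<subseteq> A" and ch: "\<And>X Y. X \<in> C \<Longrightarrow> Y \<in> C \<Longrightarrow> X \<subseteq> Y \<or> Y \<subseteq> X"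
        using C unfolding chains_def chain_subset_def by auto
      have d: "\<And>X. X \<in> C \<Longrightarrow> dlr X" using CA A_def by auto
      have "dlr (\<Union>C)" unfolding dlr_def
      proof (intro conjI allI impI)
        show "(0,0) \<in> \<Union>C" using False d unfolding dlr_def by blast
      next
        fix u r v s assume "(u,r) \<in> \<Union>C" "(v,s) \<in> \<Union>C"
        then obtain X Y where XY: "X \<in> C" "Y \<in> C" "(u,r) \<in> X" "(v,s) \<in> Y" by blast
        show "(u+v, r+s) \<in> \<Union>C"
        proof (cases "X \<subseteq> Y")
          case True
          then show ?thesis using XY d[of Y] unfolding dlr_def by blast
        next
          case False
          then have "Y \<subseteq> X" using ch XY by blast
          then show ?thesis using XY d[of X] unfolding dlr_def by blast
        qed
      next
        fix u r k assume "(u,r) \<in> \<Union>C"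
        then show "(k *\<^sub>R u, k*r) \<in> \<Union>C" using d unfolding dlr_def by blast
      next
        fix u r assume "(u,r) \<in> \<Union>C"
        then show "r \<le> norm u" using d unfolding dlr_def by blast
      qed
      moreover have "H0 \<subseteq> \<Union>C" using False CA A_def by auto
      ultimately show ?thesis unfolding A_def by blast
    qed
  qed
  from Zorn_Lemma2[OF this] obtain M where MA: "M \<in> A" and max: "\<And>X. X \<in> A \<Longrightarrow> M \<subseteq> X \<Longrightarrow> X = M"
    by blast
  have dM: "dlr M" and H0M: "H0 \<subseteq> M" using MA A_def by auto
  have tot: "\<exists>r. (v,r) \<in> M" for v
  proof (rule ccontr)
    assume nv: "\<not> (\<exists>r. (v,r) \<in> M)"
    obtain c where c: "\<And>u r. (u,r) \<in> M \<Longrightarrow> r + c \<le> norm (u + v) \<and> r - c \<le> norm (u - v)"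
      using dlr_c_exists[OF dM, of v] by blast
    define M' where "M' = {(u + a *\<^sub>R v, r + a * c) | u r a. (u,r) \<in> M}"
    have "dlr M'" unfolding M'_def by (rule dlr_ext[OF dM c])
    moreover have "M \<subseteq> M'"
    proof
      fix p assume "p \<in> M"
      then obtain u r where "p = (u,r)" "(u,r) \<in> M" by (cases p) auto
      moreover have "p = (u + 0 *\<^sub>R v, r + 0 * c)" using \<open>p = (u,r)\<close> by simp
    ultimately show "p \<in> M'" unfolding M'_def by blast
    qed
    ultimately have "M' = M" using max H0M A_def by auto
    moreover have "(v, c) \<in> M'"
    proof -
      have "(0,0) \<in> M" using dM unfolding dlr_def by blast
      moreover have "(v, c) = (0 + 1 *\<^sub>R v, 0 + 1 * c)" by simp
      ultimately show ?thesis unfolding M'_def by blast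
    qed
    ultimately show False using nv by blast
  qed
  define F where "F v = (SOME r. (v,r) \<in> M)" for v
  have FM: "(v, F v) \<in> M" for v unfolding F_def using tot someI_ex by metis
  have Fv: "(v, r) \<in> M \<Longrightarrow> F v = r" for v r using dlr_unique[OF dM FM] by blast
  have add: "F (u + v) = F u + F v" for u v
  proof -
    have "(u + v, F u + F v) \<in> M" using FM[of u] FM[of v] dM unfolding dlr_def by blast
    then show ?thesis by (rule Fv)
  qed
  have scl: "F (k *\<^sub>R u) = k *\<^sub>R F u" for k u
  proof -
    have "(k *\<^sub>R u, k * F u) \<in> M" using FM[of u] dM unfolding dlr_def by blast
    then show ?thesis using Fv by simp
  qed
  have le: "F v \<le> norm v" for v using FM dM unfolding dlr_def by blast
  have bd: "norm (F v) \<le> norm v * 1" for v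
  proof -
    have "F (-v) = - F v" using scl[of "-1" v] by simp
    then have "- F v \<le> norm v" using le[of "-v"] by simp
    then show ?thesis using le[of v] by auto
  qed
  have bl: "bounded_linear F" by (rule bounded_linear_intro[OF add scl bd])
  show ?thesis
  proof (intro exI conjI allI impI)
    show "norm (Blinfun F) \<le> 1"
      by (rule norm_blinfun_bound) (use bd bl in \<open>auto simp: bounded_linear_Blinfun_apply\<close>)
    fix v r assume "(v,r) \<in> H0"
    then show "blinfun_apply (Blinfun F) v = r" using H0M Fv bl by (auto simp: bounded_linear_Blinfun_apply)
  qed
qed


lemma orth_neg:
  assumes "approx_bj_orth \<epsilon> x y" shows "approx_bj_orth \<epsilon> x (-y)"
  unfolding approx_bj_orth_def
proof
  fix t :: real
  have "(norm x)\<^sup>2 - 2 * \<epsilon> * norm x * norm ((-t) *\<^sub>R y) \<le> (norm (x + (-t) *\<^sub>R y))\<^sup>2"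
    using assms unfolding approx_bj_orth_def by blast
  then show "(norm x)\<^sup>2 - 2 * \<epsilon> * norm x * norm (t *\<^sub>R (-y)) \<le> (norm (x + t *\<^sub>R (-y)))\<^sup>2"
    by simp
qed

lemma strong_pos:
  fixes x y :: "'a::real_normed_vector"
  assumes orth: "approx_bj_orth \<epsilon> x y" and "x \<noteq> 0" "0 \<le> \<epsilon>" "t > 0"
  shows "norm x - \<epsilon> * t * norm y \<le> norm (x + t *\<^sub>R y)"
proof (rule ccontr)
  define a where "a = norm x"
  define k where "k = \<epsilon> * norm y"
  define \<phi> where "\<phi> s = norm (x + s *\<^sub>R y)" for s
  have apos: "a > 0" using assms a_def by simp
  have kpos: "k \<ge> 0" using assms k_def by simp
  assume "\<not> (norm x - \<epsilon> * t * norm y \<le> norm (x + t *\<^sub>R y))"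
  then have lt: "\<phi> t < a - k * t" unfolding \<phi>_def a_def k_def by (simp add: algebra_simps)
  define A where "A = (\<phi> t - a) / t"
  have At: "A * t = \<phi> t - a" using assms A_def by simp
  have Ak: "A < -k"
  proof -
    have "A * t < (-k) * t" using At lt by (simp add: algebra_simps)
    then show ?thesis using assms(4) mult_right_less_imp_less[of A t "-k"] by simp
  qed
  have Aneg: "A < 0" using Ak kpos by simp
  have conv: "\<phi> s \<le> a + s * A" if "0 < s" "s \<le> t" for s
  proof -
    have eq: "x + s *\<^sub>R y = (1 - s/t) *\<^sub>R x + (s/t) *\<^sub>R (x + t *\<^sub>R y)"
      using assms(4) by (simp add: algebra_simps)
    have "norm (x + s *\<^sub>R y) \<le> norm ((1 - s/t) *\<^sub>R x) + norm ((s/t) *\<^sub>R (x + t *\<^sub>R y))"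
      unfolding eq by (rule norm_triangle_ineq)
    also have "\<dots> = (1 - s/t) * a + (s/t) * \<phi> t"
      using that assms(4) by (simp add: a_def \<phi>_def)
    also have "\<dots> = a + s * A" unfolding A_def using assms(4) by (simp add: field_simps)
    finally show ?thesis unfolding \<phi>_def .
  qed
  have hyp: "a\<^sup>2 - 2 * a * k * s \<le> (\<phi> s)\<^sup>2" if "s > 0" for s
  proof -
    have "(norm x)\<^sup>2 - 2 * \<epsilon> * norm x * norm (s *\<^sub>R y) \<le> (norm (x + s *\<^sub>R y))\<^sup>2"
      using orth unfolding approx_bj_orth_def by blast
    then show ?thesis using that by (simp add: a_def k_def \<phi>_def algebra_simps)
  qed
  define s where "s = min t (min (a / (2 * (-A))) (a * (-k - A) / A\<^sup>2))"
  have A2: "A\<^sup>2 > 0" using Aneg by simp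
  have q: "a * (-k - A) > 0" using apos Ak by simp
  have p1: "a / (2 * (-A)) > 0" using apos Aneg by (intro divide_pos_pos) auto
  have p2: "a * (-k - A) / A\<^sup>2 > 0" using q A2 by (intro divide_pos_pos) auto
  have spos: "s > 0" unfolding s_def using assms(4) p1 p2 by simp
  have st: "s \<le> t" unfolding s_def by simp
  have s1: "s \<le> a / (2 * (-A))" unfolding s_def by simp
  have s2: "s \<le> a * (-k - A) / A\<^sup>2" unfolding s_def by simp
  have m: "2 * (-A) > 0" using Aneg by simp
  have "s * (2 * (-A)) \<le> a" using s1 pos_le_divide_eq[OF m] by blast
  then have pos: "a + s * A > 0" using apos by (simp add: algebra_simps)
  have "(\<phi> s)\<^sup>2 \<le> (a + s * A)\<^sup>2"
    using conv[OF spos st] by (simp add: \<phi>_def power_mono)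
  with hyp[OF spos] have "a\<^sup>2 - 2 * a * k * s \<le> (a + s * A)\<^sup>2" by linarith
  then have "s * (2 * a * A + s * A\<^sup>2 + 2 * a * k) \<ge> 0"
    by (simp add: power2_eq_square algebra_simps)
  then have "2 * a * A + s * A\<^sup>2 + 2 * a * k \<ge> 0" using spos
    by (simp add: zero_le_mult_iff)
  then have "s * A\<^sup>2 \<ge> 2 * (a * (-k - A))" by (simp add: algebra_simps)
  moreover have "s * A\<^sup>2 \<le> a * (-k - A)" using s2 A2 by (simp add: pos_le_divide_eq)
  ultimately show False using q by simp
qed

lemma strong_all:
  fixes x y :: "'a::real_normed_vector"
  assumes orth: "approx_bj_orth \<epsilon> x y" and "x \<noteq> 0" "0 \<le> \<epsilon>"
  shows "a * norm x - \<epsilon> * \<bar>s\<bar> * norm y \<le> norm (a *\<^sub>R x + s *\<^sub>R y)"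
proof (cases "a > 0")
  case False
  have "a * norm x \<le> 0" using False by (simp add: mult_nonpos_nonneg)
  moreover have "\<epsilon> * \<bar>s\<bar> * norm y \<ge> 0" using assms by simp
  ultimately show ?thesis using norm_ge_zero[of "a *\<^sub>R x + s *\<^sub>R y"] by linarith
next
  case True
  have eq: "a *\<^sub>R x + s *\<^sub>R y = a *\<^sub>R (x + (s/a) *\<^sub>R y)" using True by (simp add: algebra_simps)
  have "norm x - \<epsilon> * \<bar>s/a\<bar> * norm y \<le> norm (x + (s/a) *\<^sub>R y)"
  proof (cases "s = 0")
    case True then show ?thesis by simp
  next
    case False
    show ?thesis
    proof (cases "s > 0")
      case True
      then show ?thesis using strong_pos[OF orth assms(2,3), of "s/a"] \<open>a > 0\<close> by simp
    next
      case False
      then have "s < 0" using \<open>s \<noteq> 0\<close> by simp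
      then have sa: "-s/a > 0" using \<open>a > 0\<close> by (intro divide_pos_pos) auto
      have "norm x - \<epsilon> * (-s/a) * norm (-y) \<le> norm (x + (-s/a) *\<^sub>R (-y))"
        using strong_pos[OF orth_neg[OF orth] assms(2,3) sa] by simp
      moreover have "s/a < 0" using \<open>s < 0\<close> \<open>a > 0\<close> by (simp add: divide_less_0_iff)
      ultimately show ?thesis using \<open>s < 0\<close> \<open>a > 0\<close> by (simp add: abs_if)
    qed
  qed
  then have "a * (norm x - \<epsilon> * \<bar>s/a\<bar> * norm y) \<le> a * norm (x + (s/a) *\<^sub>R y)"
    using True by (simp add: mult_left_mono)
  moreover have "norm (a *\<^sub>R x + s *\<^sub>R y) = a * norm (x + (s/a) *\<^sub>R y)"
    using True by (subst eq) simp
  moreover have "a * (\<epsilon> * \<bar>s/a\<bar> * norm y) = \<epsilon> * \<bar>s\<bar> * norm y"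
    using True by (simp add: abs_div)
  ultimately show ?thesis by (simp add: algebra_simps)
qed

lemma char_functional:
  fixes x y :: "'a::real_normed_vector"
  assumes orth: "approx_bj_orth \<epsilon> x y" and "x \<noteq> 0" "0 \<le> \<epsilon>"
  shows "\<exists>f::'a \<Rightarrow>\<^sub>L real. norm f \<le> 1 \<and> blinfun_apply f x = norm x \<and> \<bar>blinfun_apply f y\<bar> \<le> \<epsilon> * norm y"
proof -
  define k where "k = \<epsilon> * norm y"
  have kpos: "k \<ge> 0" using assms k_def by simp
  define S where "S = {a * norm x - norm (a *\<^sub>R x - y) | a. True}"
  have Sk: "v \<le> k" if "v \<in> S" for v
  proof -
    obtain a where v: "v = a * norm x - norm (a *\<^sub>R x - y)" using \<open>v \<in> S\<close> S_def by blast
    have "a * norm x - \<epsilon> * \<bar>-1\<bar> * norm y \<le> norm (a *\<^sub>R x + (-1) *\<^sub>R y)"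
      by (rule strong_all[OF assms])
    then show ?thesis using v k_def by simp
  qed
  have Sne: "S \<noteq> {}" unfolding S_def by blast
  have Sbdd: "bdd_above S" using Sk unfolding bdd_above_def by blast
  define d where "d = max (Sup S) (-k)"
  have dk: "\<bar>d\<bar> \<le> k"
  proof -
    have "Sup S \<le> k" using Sne Sk by (rule cSup_least)
    then show ?thesis using kpos d_def by simp
  qed
  define Hx where "Hx = {(a *\<^sub>R x, a * norm x) | a. True}"
  have dHx: "dlr Hx" unfolding dlr_def
  proof (intro conjI allI impI)
    show "(0,0) \<in> Hx" unfolding Hx_def by (auto intro!: exI[of _ 0])
  next
    fix u r v s assume "(u,r) \<in> Hx" "(v,s) \<in> Hx"
    then obtain a b where "u = a *\<^sub>R x" "r = a * norm x" "v = b *\<^sub>R x" "s = b * norm x"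
      unfolding Hx_def by blast
    then have "(u+v, r+s) = ((a+b) *\<^sub>R x, (a+b) * norm x)" by (simp add: algebra_simps)
    then show "(u+v, r+s) \<in> Hx" unfolding Hx_def by blast
  next
    fix u r c assume "(u,r) \<in> Hx"
    then obtain a where "u = a *\<^sub>R x" "r = a * norm x" unfolding Hx_def by blast
    then have "(c *\<^sub>R u, c * r) = ((c*a) *\<^sub>R x, (c*a) * norm x)" by simp
    then show "(c *\<^sub>R u, c * r) \<in> Hx" unfolding Hx_def by blast
  next
    fix u r assume "(u,r) \<in> Hx"
    then obtain a where "u = a *\<^sub>R x" "r = a * norm x" unfolding Hx_def by blast
    then show "r \<le> norm u" using mult_right_mono[OF abs_ge_self[of a] norm_ge_zero[of x]] by simp
  qed
  have cond: "r + d \<le> norm (u + y) \<and> r - d \<le> norm (u - y)" if urH: "(u,r) \<in> Hx" for u r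
  proof -
    obtain a where ur: "u = a *\<^sub>R x" "r = a * norm x" using urH unfolding Hx_def by blast
    have c1: "-k \<le> norm (a *\<^sub>R x + y) - a * norm x"
    proof -
      have "a * norm x - \<epsilon> * \<bar>1\<bar> * norm y \<le> norm (a *\<^sub>R x + 1 *\<^sub>R y)"
        by (rule strong_all[OF assms])
      then show ?thesis using k_def by simp
    qed
    have c2: "Sup S \<le> norm (a *\<^sub>R x + y) - a * norm x"
    proof (rule cSup_least[OF Sne])
      fix v assume "v \<in> S"
      then obtain b where v: "v = b * norm x - norm (b *\<^sub>R x - y)" using S_def by blast
      show "v \<le> norm (a *\<^sub>R x + y) - a * norm x"
      proof -
        have "(a + b) * norm x \<le> norm ((a + b) *\<^sub>R x)"
          using mult_right_mono[OF abs_ge_self[of "a+b"] norm_ge_zero[of x]] by simp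
        also have "(a + b) *\<^sub>R x = (a *\<^sub>R x + y) + (b *\<^sub>R x - y)" by (simp add: algebra_simps)
        also have "norm \<dots> \<le> norm (a *\<^sub>R x + y) + norm (b *\<^sub>R x - y)" by (rule norm_triangle_ineq)
        finally show ?thesis using v by (simp add: algebra_simps)
      qed
    qed
    have c3: "a * norm x - norm (a *\<^sub>R x - y) \<le> Sup S"
      using Sbdd by (rule cSup_upper[rotated]) (auto simp: S_def)
    show ?thesis using c1 c2 c3 ur d_def by auto
  qed
  define H1 where "H1 = {(u + a *\<^sub>R y, r + a * d) | u r a. (u,r) \<in> Hx}"
  have dH1: "dlr H1" unfolding H1_def by (rule dlr_ext[OF dHx cond])
  obtain f :: "'a \<Rightarrow>\<^sub>L real" where f: "norm f \<le> 1" "\<And>v r. (v,r) \<in> H1 \<Longrightarrow> blinfun_apply f v = r"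
    using hahn_banach_dlr[OF dH1] by blast
  have "(x, norm x) \<in> H1"
  proof -
    have "(1 *\<^sub>R x, 1 * norm x) \<in> Hx" unfolding Hx_def by blast
    moreover have "(x, norm x) = (1 *\<^sub>R x + 0 *\<^sub>R y, 1 * norm x + 0 * d)" by simp
    ultimately show ?thesis unfolding H1_def by blast
  qed
  moreover have "(y, d) \<in> H1"
  proof -
    have "(0 *\<^sub>R x, 0 * norm x) \<in> Hx" unfolding Hx_def by blast
    moreover have "(y, d) = (0 *\<^sub>R x + 1 *\<^sub>R y, 0 * norm x + 1 * d)" by simp
    ultimately show ?thesis unfolding H1_def by blast
  qed
  ultimately show ?thesis using f dk k_def by auto
qed

lemma easy_dir:
  fixes x z :: "'a::real_normed_vector" and f :: "'a \<Rightarrow>\<^sub>L real"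
  assumes "norm f \<le> 1" "blinfun_apply f x = norm x" "\<bar>blinfun_apply f z\<bar> \<le> \<delta> * norm z" "0 \<le> \<delta>"
  shows "approx_bj_orth \<delta> x z"
  unfolding approx_bj_orth_def
proof
  fix t :: real
  define a where "a = norm x"
  define b where "b = \<delta> * norm (t *\<^sub>R z)"
  have b0: "b \<ge> 0" using assms b_def by simp
  have "blinfun_apply f (x + t *\<^sub>R z) = a + t * blinfun_apply f z"
    using assms a_def by (simp add: blinfun.add_right blinfun.scaleR_right)
  moreover have "t * blinfun_apply f z \<ge> - b"
  proof -
    have "\<bar>t * blinfun_apply f z\<bar> \<le> \<bar>t\<bar> * (\<delta> * norm z)"
      using assms(3) by (simp add: abs_mult mult_left_mono)
    then show ?thesis unfolding b_def by (simp add: algebra_simps)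
  qed
  moreover have "blinfun_apply f (x + t *\<^sub>R z) \<le> norm (x + t *\<^sub>R z)"
  proof -
    have "\<bar>blinfun_apply f (x + t *\<^sub>R z)\<bar> \<le> norm f * norm (x + t *\<^sub>R z)"
      using norm_blinfun[of f] by simp
    also have "\<dots> \<le> norm (x + t *\<^sub>R z)" using assms(1) by (simp add: mult_left_le_one_le)
    finally show ?thesis by simp
  qed
  ultimately have ge: "a - b \<le> norm (x + t *\<^sub>R z)" by linarith
  have "a\<^sup>2 - 2 * a * b \<le> (norm (x + t *\<^sub>R z))\<^sup>2"
  proof (cases "a - b \<ge> 0")
    case True
    have "(a - b)\<^sup>2 \<le> (norm (x + t *\<^sub>R z))\<^sup>2" using True ge by (simp add: power_mono)
    moreover have "a\<^sup>2 - 2 * a * b \<le> (a - b)\<^sup>2" by (simp add: power2_eq_square algebra_simps)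
    ultimately show ?thesis by linarith
  next
    case False
    have "a\<^sup>2 - 2 * a * b = a * (a - 2 * b)" by (simp add: power2_eq_square algebra_simps)
    also have "\<dots> \<le> 0" using False a_def b0 by (simp add: mult_nonneg_nonpos)
    finally have "a\<^sup>2 - 2 * a * b \<le> 0" .
    then show ?thesis using zero_le_power2[of "norm (x + t *\<^sub>R z)"] by linarith
  qed
  then show "(norm x)\<^sup>2 - 2 * \<delta> * norm x * norm (t *\<^sub>R z) \<le> (norm (x + t *\<^sub>R z))\<^sup>2"
    unfolding a_def b_def by (simp add: algebra_simps)
qed

lemma in_J:
  fixes f :: "'a::real_normed_vector \<Rightarrow>\<^sub>L real"
  assumes "norm f \<le> 1" "blinfun_apply f x = norm x" "x \<noteq> 0"
  shows "f \<in> support_functionals x"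
proof -
  have "norm x \<le> norm f * norm x" using norm_blinfun[of f x] assms(2) by simp
  then have "1 \<le> norm f" using assms(3) by simp
  then show ?thesis using assms unfolding support_functionals_def by simp
qed

theorem theorem4p2:
  fixes x y1 y2 :: "'a::real_normed_vector" and \<epsilon> :: real
  assumes "x \<noteq> 0" and "y1 \<noteq> 0" and "y2 \<noteq> 0"
    and "approx_bj_orth \<epsilon> x y1" and "approx_bj_orth \<epsilon> x y2"
    and "0 \<le> \<epsilon>" and "\<epsilon> < 1"
    and "\<epsilon> < 2 * norm (y1 + y2) / (3 * (norm y1 + norm y2))"
    and "2 * norm (y1 + y2) / (3 * (norm y1 + norm y2)) < 1"
    and "eps_smooth \<epsilon> x"
  shows "\<exists>\<epsilon>1. 0 \<le> \<epsilon>1 \<and> \<epsilon>1 < 1 \<and> approx_bj_orth \<epsilon>1 x (y1 + y2)"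
proof -
  obtain f1 :: "'a \<Rightarrow>\<^sub>L real" where f1: "norm f1 \<le> 1" "blinfun_apply f1 x = norm x"
    "\<bar>blinfun_apply f1 y1\<bar> \<le> \<epsilon> * norm y1"
    using char_functional[OF assms(4,1,6)] by blast
  obtain f2 :: "'a \<Rightarrow>\<^sub>L real" where f2: "norm f2 \<le> 1" "blinfun_apply f2 x = norm x"
    "\<bar>blinfun_apply f2 y2\<bar> \<le> \<epsilon> * norm y2"
    using char_functional[OF assms(5,1,6)] by blast
  have J1: "f1 \<in> support_functionals x" using in_J f1 assms(1) by blast
  have J2: "f2 \<in> support_functionals x" using in_J f2 assms(1) by blast
  have d12: "norm (f1 - f2) \<le> \<epsilon>" using assms(10) J1 J2 unfolding eps_smooth_def by blast
  have d21: "norm (f2 - f1) \<le> \<epsilon>" using assms(10) J1 J2 unfolding eps_smooth_def by blast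
  define n1 where "n1 = norm y1"
  define n2 where "n2 = norm y2"
  define N where "N = norm (y1 + y2)"
  have n1p: "n1 > 0" "n2 > 0" using assms(2,3) n1_def n2_def by auto
  have cross: "\<bar>blinfun_apply f v\<bar> \<le> \<bar>blinfun_apply g v\<bar> + \<epsilon> * norm v"
    if "norm (f - g) \<le> \<epsilon>" for f g :: "'a \<Rightarrow>\<^sub>L real" and v
  proof -
    have "blinfun_apply f v = blinfun_apply g v + blinfun_apply (f - g) v"
      by (simp add: blinfun.diff_left)
    moreover have "\<bar>blinfun_apply (f - g) v\<bar> \<le> norm (f - g) * norm v"
      using norm_blinfun[of "f - g" v] by simp
    moreover have "norm (f - g) * norm v \<le> \<epsilon> * norm v"
      using that by (simp add: mult_right_mono)
    ultimately show ?thesis by linarith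
  qed
  have b1: "\<bar>blinfun_apply f1 (y1 + y2)\<bar> \<le> \<epsilon> * n1 + 2 * \<epsilon> * n2"
  proof -
    have "\<bar>blinfun_apply f1 (y1 + y2)\<bar> \<le> \<bar>blinfun_apply f1 y1\<bar> + \<bar>blinfun_apply f1 y2\<bar>"
      by (simp add: blinfun.add_right abs_triangle_ineq)
    moreover have "\<bar>blinfun_apply f1 y2\<bar> \<le> \<bar>blinfun_apply f2 y2\<bar> + \<epsilon> * norm y2"
      by (rule cross[OF d12])
    ultimately show ?thesis using f1 f2 unfolding n1_def n2_def by linarith
  qed
  have b2: "\<bar>blinfun_apply f2 (y1 + y2)\<bar> \<le> 2 * \<epsilon> * n1 + \<epsilon> * n2"
  proof -
    have "\<bar>blinfun_apply f2 (y1 + y2)\<bar> \<le> \<bar>blinfun_apply f2 y1\<bar> + \<bar>blinfun_apply f2 y2\<bar>"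
      by (simp add: blinfun.add_right abs_triangle_ineq)
    moreover have "\<bar>blinfun_apply f2 y1\<bar> \<le> \<bar>blinfun_apply f1 y1\<bar> + \<epsilon> * norm y1"
      by (rule cross[OF d21])
    ultimately show ?thesis using f1 f2 unfolding n1_def n2_def by linarith
  qed
  have key: "3 * \<epsilon> * (n1 + n2) < 2 * N"
  proof -
    have "0 < 3 * (n1 + n2)" using n1p by simp
    then show ?thesis using assms(8) unfolding n1_def n2_def N_def
      by (simp add: pos_less_divide_eq mult.commute mult.left_commute)
  qed
  have Npos: "N > 0"
  proof -
    have "0 \<le> 3 * \<epsilon> * (n1 + n2)" using assms(6) n1p by simp
    then show ?thesis using key by simp
  qed
  obtain f where f: "norm f \<le> 1" "blinfun_apply f x = norm x"
    "2 * \<bar>blinfun_apply f (y1 + y2)\<bar> \<le> 3 * \<epsilon> * (n1 + n2)"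
  proof (cases "n1 \<le> n2")
    case True
    then have "\<epsilon> * n1 + 2 * \<epsilon> * n2 \<le> 2 * \<epsilon> * n1 + \<epsilon> * n2 \<or> 2 * \<epsilon> * n1 + \<epsilon> * n2 \<le> \<epsilon> * n1 + 2 * \<epsilon> * n2"
      by linarith
    have "2 * \<bar>blinfun_apply f2 (y1 + y2)\<bar> \<le> 3 * \<epsilon> * (n1 + n2)"
    proof -
      have "\<epsilon> * n1 \<le> \<epsilon> * n2" using True assms(6) by (simp add: mult_left_mono)
      then show ?thesis using b2 by (simp add: algebra_simps)
    qed
    then show ?thesis using that f2 by blast
  next
    case False
    have "2 * \<bar>blinfun_apply f1 (y1 + y2)\<bar> \<le> 3 * \<epsilon> * (n1 + n2)"
    proof -
      have "\<epsilon> * n2 \<le> \<epsilon> * n1" using False assms(6) by (simp add: mult_left_mono)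
      then show ?thesis using b1 by (simp add: algebra_simps)
    qed
    then show ?thesis using that f1 by blast
  qed
  define e1 where "e1 = \<bar>blinfun_apply f (y1 + y2)\<bar> / N"
  show ?thesis
  proof (intro exI conjI)
    show "0 \<le> e1" unfolding e1_def using Npos by simp
    show "e1 < 1" unfolding e1_def using Npos f(3) key by (simp add: divide_less_eq)
    have "\<bar>blinfun_apply f (y1 + y2)\<bar> \<le> e1 * norm (y1 + y2)"
      unfolding e1_def N_def[symmetric] using Npos by simp
    then show "approx_bj_orth e1 x (y1 + y2)"
      using easy_dir[OF f(1,2)] \<open>0 \<le> e1\<close> by blast
  qed
qed

end
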